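(* Let $c\ge1$ be an integer and let $\Delta_c:=\mathbb E\big[\frac{c}{\tilde k_{+c}};B^0_{N+1}\ge c\big]$. Then $$\Delta_c\le \mathbb P\big(B^1_{1:c}=N_1\big)\,\mathbb E\Big[\frac{c}{c+N_1+B^0_{1:N_1+c}}\,\Big|\,B^0_{N+1}\ge c\Big]+1-\mathbb P\big(B^1_{1:c}=N_1\big)$$ and $$\mathbb E\big[\tilde k_{+c}\,\big|\,B^0_{N+1}\ge c\big]\ge\frac{(N_1+c)\,\mathbb P\big(B^1_{1:c}=N_1\big)}{1-\mathbb E\Big[\frac{B^0_{1:N}}{N}\,\Big|\,B^0_{1:N}\le N_0-c\Big]}.$$
   Context: Setting: $N\ge 1$ tests indexed by $\mathcal N=\{1,\dots,N\}=\mathcal H_0\sqcup\mathcal H_1$ (null and alternative indices), $N_0=|\mathcal H_0|$, $N_1=|\mathcal H_1|$. The p-values $p=(p_i)_{i\in\mathcal N}$ are jointly independent, with $p_i\sim U(0,1)$ for $i\in\mathcal H_0$ and $p_i\sim\mathbb P^1_i$ (an arbitrary distribution on $[0,1]$) for $i\in\mathcal H_1$. Fix $q\in(0,1)$. Bins: $B_i=\{x:(i-1)q/N\le x<iq/N\}$ for $i=1,\dots,N$, and $B_{N+1}=[q,1]$. Loads: $B^0_i=|\{j\in\mathcal H_0:p_j\in B_i\}|$, $B^1_i=|\{j\in\mathcal H_1:p_j\in B_i\}|$, $B^{\mathcal N}_i=|\{j\in\mathcal N:p_j\in B_i\}|$; $B^{\ast}_{a:b}=\sum_{l=a}^bB^\ast_l$,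 $B^\ast_{1:0}=0$. Rejection count $\tilde k=\max\{i\in\{0,\dots,N\}:B^{\mathcal N}_{1:i}=i\}$; $\tilde k_{+c}=\max\{i\in\{c,\dots,N\}:B^{\mathcal N}_{1:i}=i-c\}$ if $B^0_{N+1}\ge c$, and $\tilde k_{+c}=\tilde k$ otherwise. $\mathbb E[X;A]=\mathbb E[X\mathbf 1_A]$. *)

theory Defs
  imports "HOL-Probability.Probability"
begin

definition bin :: "nat \<Rightarrow> real \<Rightarrow> nat \<Rightarrow> real set" where
  "bin N q i = (if i = N + 1 then {q..1}
                else {x. (real i - 1) * q / real N \<le> x \<and> x < real i * q / real N})"

definition load :: "nat \<Rightarrow> real \<Rightarrow> nat set \<Rightarrow> (nat \<Rightarrow> real) \<Rightarrow> nat \<Rightarrow> nat" where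
  "load N q S pv i = card {j \<in> S. pv j \<in> bin N q i}"

text \<open>B^S_{a:b} = sum of loads of bins a..b (empty sum = 0 if b < a).\<close>
definition loads :: "nat \<Rightarrow> real \<Rightarrow> nat set \<Rightarrow> (nat \<Rightarrow> real) \<Rightarrow> nat \<Rightarrow> nat \<Rightarrow> nat" where
  "loads N q S pv a b = (\<Sum>l=a..b. load N q S pv l)"

definition ktilde :: "nat \<Rightarrow> real \<Rightarrow> (nat \<Rightarrow> real) \<Rightarrow> nat" where
  "ktilde N q pv = Max {i \<in> {0..N}. loads N q {1..N} pv 1 i = i}"

definition ktilde_plus :: "nat \<Rightarrow> real \<Rightarrow> nat set \<Rightarrow> nat \<Rightarrow> (nat \<Rightarrow> real) \<Rightarrow> nat" where
  "ktilde_plus N q H0 c pv =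
     (if load N q H0 pv (N + 1) \<ge> c
      then Max {i \<in> {c..N}. int (loads N q {1..N} pv 1 i) = int i - int c}
      else ktilde N q pv)"

definition cond_expect :: "'a measure \<Rightarrow> ('a \<Rightarrow> real) \<Rightarrow> 'a set \<Rightarrow> real" where
  "cond_expect M X A = (\<integral>x. X x * indicator A x \<partial>M) / measure M A"

end

theory Submission
  imports Defs "HOL-Probability.Probability"
begin


definition lab :: "nat \<Rightarrow> real \<Rightarrow> real \<Rightarrow> nat" where
  "lab N q x = (if \<exists>l\<in>{1..N+1}. x \<in> bin N q l then (THE l. l\<in>{1..N+1} \<and> x \<in> bin N q l) else 0)"

definition rep :: "nat \<Rightarrow> real \<Rightarrow> nat \<Rightarrow> real" where
  "rep N q y = (if 1 \<le> y \<and> y \<le> N then (real y - 1/2) * q / real N else if y = N+1 then 1 else -1)"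

lemma bin_disj:
  assumes "N \<ge> 1" "0 < q" "q < 1" "l \<in> {1..N+1}" "l' \<in> {1..N+1}" "x \<in> bin N q l" "x \<in> bin N q l'"
  shows "l = l'"
proof (rule ccontr)
  assume ne: "l \<noteq> l'"
  have key: False if "a < b" "a \<in> {1..N+1}" "b \<in> {1..N+1}" "x \<in> bin N q a" "x \<in> bin N q b" for a b
  proof (cases "b = N+1")
    case True
    then have "a \<le> N" using that by auto
    then have "x < real a * q / real N" using that(4) True that(1) by (auto simp: bin_def)
    also have "\<dots> \<le> q" using \<open>a \<le> N\<close> assms by (simp add: field_simps)
    finally show False using that(5) True by (auto simp: bin_def)
  next
    case False
    then have "b \<le> N" "a \<le> N" using that by auto
    then have "x < real a * q / real N" using that(4) by (auto simp: bin_def)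
    also have "\<dots> \<le> (real b - 1) * q / real N" using that(1) assms
      by (intro divide_right_mono mult_right_mono) auto
    finally show False using that(5) False by (auto simp: bin_def)
  qed
  show False using ne key[of l l'] key[of l' l] assms by (cases "l < l'") auto
qed

lemma lab_eq:
  assumes "N \<ge> 1" "0 < q" "q < 1" "l \<in> {1..N+1}"
  shows "lab N q x = l \<longleftrightarrow> x \<in> bin N q l"
proof
  assume "x \<in> bin N q l"
  then have "(THE l. l\<in>{1..N+1} \<and> x \<in> bin N q l) = l"
    using bin_disj[OF assms(1-3)] assms(4) by (intro the_equality) auto
  then show "lab N q x = l" using \<open>x \<in> bin N q l\<close> assms(4) unfolding lab_def by auto
next
  assume h: "lab N q x = l"
  then have ex: "\<exists>l\<in>{1..N+1}. x \<in> bin N q l" using assms(4) unfolding lab_def by (auto split: if_splits)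
  then obtain l0 where l0: "l0\<in>{1..N+1}" "x \<in> bin N q l0" by auto
  then have "(THE l. l\<in>{1..N+1} \<and> x \<in> bin N q l) = l0"
    using bin_disj[OF assms(1-3)] by (intro the_equality) auto
  then show "x \<in> bin N q l" using h ex l0 unfolding lab_def by auto
qed

lemma lab_range:
  assumes "N \<ge> 1" "0 < q" "q < 1"
  shows "lab N q x \<le> N + 1"
proof (cases "\<exists>l\<in>{1..N+1}. x \<in> bin N q l")
  case True
  then obtain l0 where "l0\<in>{1..N+1}" "x \<in> bin N q l0" by auto
  then have "lab N q x = l0" using lab_eq[OF assms] by blast
  then show ?thesis using \<open>l0\<in>{1..N+1}\<close> by auto
qed (auto simp: lab_def)

lemma rep_bin:
  assumes "N \<ge> 1" "0 < q" "q < 1" "l \<in> {1..N+1}"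
  shows "rep N q y \<in> bin N q l \<longleftrightarrow> y = l"
proof -
  have Npos: "real N > 0" using assms by auto
  have lq: "real k * q / real N \<le> q" if "k \<le> N" for k
  proof -
    have "real k * q \<le> real N * q" using that assms by (intro mult_right_mono) auto
    then show ?thesis using Npos by (simp add: divide_le_eq mult.commute)
  qed
  consider (A) "1 \<le> y \<and> y \<le> N" | (B) "y = N+1" | (C) "\<not> (1 \<le> y \<and> y \<le> N)" "y \<noteq> N+1" by blast
  then show ?thesis
  proof cases
    case A
    then have r: "rep N q y = (real y - 1/2) * q / real N" by (simp add: rep_def)
    show ?thesis
    proof (cases "l = N+1")
      case True
      have "(real y - 1/2) * q / real N < real N * q / real N"
        using A assms Npos by (intro divide_strict_right_mono mult_strict_right_mono) auto
      then have "(real y - 1/2) * q / real N < q" using Npos by simp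
      then show ?thesis using True r A by (auto simp: bin_def)
    next
      case False
      then have "l \<le> N" using assms by auto
      have "(real l - 1) * q / real N \<le> (real y - 1/2) * q / real N \<longleftrightarrow> real l - 1 \<le> real y - 1/2"
        using Npos assms by (simp add: divide_le_cancel mult_le_cancel_right)
      moreover have "(real y - 1/2) * q / real N < real l * q / real N \<longleftrightarrow> real y - 1/2 < real l"
        using Npos assms by (simp add: divide_less_cancel mult_less_cancel_right)
      ultimately have "rep N q y \<in> bin N q l \<longleftrightarrow> real l - 1 \<le> real y - 1/2 \<and> real y - 1/2 < real l"
        using r False by (simp add: bin_def)
      also have "\<dots> \<longleftrightarrow> y = l" by linarith
      finally show ?thesis .
    qed
  next
    case B
    then have r: "rep N q y = 1" by (simp add: rep_def)
    show ?thesis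
    proof (cases "l = N+1")
      case True then show ?thesis using r B assms by (auto simp: bin_def)
    next
      case False
      then have "l \<le> N" using assms by auto
      then have "real l * q / real N < 1" using lq[of l] assms by linarith
      then show ?thesis using r B False by (auto simp: bin_def)
    qed
  next
    case C
    then have "rep N q y = -1" unfolding rep_def by auto
    moreover have "(real l - 1) * q / real N \<ge> 0" using assms by auto
    then have "\<not> (real l - 1) * q / real N \<le> -1" by linarith
    ultimately have "rep N q y \<notin> bin N q l" unfolding bin_def using assms by (auto split: if_splits)
    then show ?thesis using C assms by auto
  qed
qed

lemma rep_lab:
  assumes "N \<ge> 1" "0 < q" "q < 1" "l \<in> {1..N+1}"
  shows "rep N q (lab N q x) \<in> bin N q l \<longleftrightarrow> x \<in> bin N q l"
  using rep_bin[OF assms] lab_eq[OF assms] by simp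


lemma bin_borel: "bin N q l \<in> sets borel"
  unfolding bin_def by (auto simp: borel_closed)

lemma lab_measurable:
  assumes "N \<ge> 1" "0 < q" "q < 1"
  shows "lab N q \<in> borel \<rightarrow>\<^sub>M count_space UNIV"
proof (subst measurable_count_space_eq2_countable, safe)
  fix l :: nat
  show "lab N q -` {l} \<inter> space borel \<in> sets borel"
  proof (cases "l \<in> {1..N+1}")
    case True
    then have "lab N q -` {l} = bin N q l" using lab_eq[OF assms True] by auto
    then show ?thesis using bin_borel by simp
  next
    case False
    show ?thesis
    proof (cases "l = 0")
      case True
      have "lab N q -` {l} = UNIV - (\<Union>l'\<in>{1..N+1}. bin N q l')"
      proof -
        have "lab N q x = 0 \<longleftrightarrow> x \<notin> (\<Union>l'\<in>{1..N+1}. bin N q l')" for x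
        proof
          assume h0: "lab N q x = 0"
          show "x \<notin> (\<Union>l'\<in>{1..N+1}. bin N q l')"
          proof
            assume "x \<in> (\<Union>l'\<in>{1..N+1}. bin N q l')"
            then obtain l' where "l'\<in>{1..N+1}" "x\<in>bin N q l'" by auto
            then have "lab N q x = l'" using lab_eq[OF assms] by blast
            then show False using h0 \<open>l'\<in>{1..N+1}\<close> by auto
          qed
        next
          assume "x \<notin> (\<Union>l'\<in>{1..N+1}. bin N q l')"
          then show "lab N q x = 0" unfolding lab_def by auto
        qed
        then show ?thesis using True by auto
      qed
      then show ?thesis using bin_borel by auto
    next
      case F2: False
      then have "lab N q -` {l} = {}" using False lab_range[OF assms] by fastforce
      then show ?thesis by simp
    qed
  qed
qed simp

locale setting = prob_space M for M :: "'a measure" +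
  fixes p :: "nat \<Rightarrow> 'a \<Rightarrow> real" and N :: nat and q :: real
  assumes N1: "N \<ge> 1" and q0: "0 < q" and q1: "q < 1"
    and ind: "indep_vars (\<lambda>_. borel) p {1..N}"
begin

definition Lam :: "'a \<Rightarrow> nat \<Rightarrow> nat" where
  "Lam \<omega> = restrict (\<lambda>j. lab N q (p j \<omega>)) {1..N}"

definition pr :: "nat \<Rightarrow> nat \<Rightarrow> real" where
  "pr j y = prob {\<omega> \<in> space M. lab N q (p j \<omega>) = y}"

abbreviation VV :: "nat set" where "VV \<equiv> {0..N+1}"

definition W :: "(nat \<Rightarrow> nat) \<Rightarrow> real" where
  "W v = (\<Prod>j\<in>{1..N}. pr j (v j))"

lemma ind_lab: "indep_vars (\<lambda>_. count_space UNIV) (\<lambda>j \<omega>. lab N q (p j \<omega>)) {1..N}"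
  by (rule indep_vars_compose2[OF ind]) (rule lab_measurable[OF N1 q0 q1])

lemma lab_rv: "j \<in> {1..N} \<Longrightarrow> (\<lambda>\<omega>. lab N q (p j \<omega>)) \<in> M \<rightarrow>\<^sub>M count_space UNIV"
  using ind_lab unfolding indep_vars_def by auto

lemma Lam_in: "\<omega> \<in> space M \<Longrightarrow> Lam \<omega> \<in> PiE {1..N} (\<lambda>_. VV)"
  unfolding Lam_def using lab_range[OF N1 q0 q1] by auto

lemma ev_sets: "{\<omega> \<in> space M. Lam \<omega> = v} \<in> events"
proof -
  have "{\<omega> \<in> space M. Lam \<omega> = v} = (if v \<in> extensional {1..N} then 
     (\<Inter>j\<in>{1..N}. (\<lambda>\<omega>. lab N q (p j \<omega>)) -` {v j} \<inter> space M) else {})"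
    using N1 by (auto simp: Lam_def extensional_def fun_eq_iff)
  also have "\<dots> \<in> events"
  proof -
    have "(\<Inter>j\<in>{1..N}. (\<lambda>\<omega>. lab N q (p j \<omega>)) -` {v j} \<inter> space M) \<in> events"
      using N1 by (intro sets.finite_INT) (auto intro: measurable_sets[OF lab_rv])
    then show ?thesis by auto
  qed
  finally show ?thesis .
qed

lemma prob_Lam: 
  assumes "v \<in> PiE {1..N} (\<lambda>_. VV)"
  shows "prob {\<omega> \<in> space M. Lam \<omega> = v} = W v"
proof -
  have "{\<omega> \<in> space M. Lam \<omega> = v} = (\<Inter>j\<in>{1..N}. (\<lambda>\<omega>. lab N q (p j \<omega>)) -` {v j} \<inter> space M)"
    using N1 assms by (auto simp: Lam_def PiE_def extensional_def fun_eq_iff)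
  then have "prob {\<omega> \<in> space M. Lam \<omega> = v} = (\<Prod>j\<in>{1..N}. prob ((\<lambda>\<omega>. lab N q (p j \<omega>)) -` {v j} \<inter> space M))"
    using N1 indep_varsD_finite[OF ind_lab, of "\<lambda>j. {v j}"] by simp
  also have "\<dots> = W v" unfolding W_def pr_def by (intro prod.cong) (auto simp: vimage_def Int_def conj_commute)
  finally show ?thesis .
qed

lemma transfer:
  fixes F :: "(nat \<Rightarrow> nat) \<Rightarrow> real"
  shows "integrable M (\<lambda>\<omega>. F (Lam \<omega>))"
    and "(\<integral>\<omega>. F (Lam \<omega>) \<partial>M) = (\<Sum>v\<in>PiE {1..N} (\<lambda>_. VV). F v * W v)"
proof -
  let ?P = "PiE {1..N} (\<lambda>_. VV)"
  have fin: "finite ?P" by (auto intro!: finite_PiE)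
  have eq: "F (Lam \<omega>) = (\<Sum>v\<in>?P. F v * indicator {\<omega> \<in> space M. Lam \<omega> = v} \<omega>)" if "\<omega> \<in> space M" for \<omega>
  proof -
    have "(\<Sum>v\<in>?P. F v * indicator {\<omega> \<in> space M. Lam \<omega> = v} \<omega>) = (\<Sum>v\<in>{Lam \<omega>}. F v)"
      using Lam_in[OF that] that fin by (intro sum.mono_neutral_cong_right) (auto simp: indicator_def)
    then show ?thesis by simp
  qed
  have int: "integrable M (\<lambda>\<omega>. \<Sum>v\<in>?P. F v * indicator {\<omega> \<in> space M. Lam \<omega> = v} \<omega>)"
  proof -
    have "integrable M (indicator {\<omega> \<in> space M. Lam \<omega> = v} :: 'a \<Rightarrow> real)" for v
      using ev_sets[of v] by (intro integrable_real_indicator) (auto simp: less_top[symmetric])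
    then show ?thesis by (intro Bochner_Integration.integrable_sum integrable_mult_right) auto
  qed
  show "integrable M (\<lambda>\<omega>. F (Lam \<omega>))"
    by (rule Bochner_Integration.integrable_cong[THEN iffD1, OF refl _ int]) (simp add: eq)
  have "(\<integral>\<omega>. F (Lam \<omega>) \<partial>M) = (\<integral>\<omega>. (\<Sum>v\<in>?P. F v * indicator {\<omega> \<in> space M. Lam \<omega> = v} \<omega>) \<partial>M)"
    by (rule Bochner_Integration.integral_cong) (simp_all add: eq)
  also have "\<dots> = (\<Sum>v\<in>?P. F v * prob {\<omega> \<in> space M. Lam \<omega> = v})"
    using ev_sets by (subst Bochner_Integration.integral_sum) (auto intro!: integrable_mult_right integrable_real_indicator simp: less_top[symmetric])
  also have "\<dots> = (\<Sum>v\<in>?P. F v * W v)" by (intro sum.cong) (auto simp: prob_Lam)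
  finally show "(\<integral>\<omega>. F (Lam \<omega>) \<partial>M) = (\<Sum>v\<in>?P. F v * W v)" .
qed

end


definition cnt :: "nat set \<Rightarrow> (nat \<Rightarrow> nat) \<Rightarrow> nat \<Rightarrow> nat" where
  "cnt S v l = card {j\<in>S. v j = l}"

definition cs :: "nat set \<Rightarrow> (nat \<Rightarrow> nat) \<Rightarrow> nat \<Rightarrow> nat" where
  "cs S v b = (\<Sum>l=1..b. cnt S v l)"

lemma cs_card: "finite S \<Longrightarrow> cs S v b = card {j\<in>S. 1 \<le> v j \<and> v j \<le> b}"
proof (induction b)
  case 0 then show ?case by (simp add: cs_def)
next
  case (Suc b)
  have "{j\<in>S. 1 \<le> v j \<and> v j \<le> Suc b} = {j\<in>S. 1 \<le> v j \<and> v j \<le> b} \<union> {j\<in>S. v j = Suc b}" by auto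
  moreover have "card (\<dots>) = card {j\<in>S. 1 \<le> v j \<and> v j \<le> b} + card {j\<in>S. v j = Suc b}"
    using Suc.prems by (intro card_Un_disjoint) auto
  ultimately show ?case using Suc by (simp add: cs_def cnt_def)
qed

lemma card_filter_sum: "finite S \<Longrightarrow> real (card {j\<in>S. P j}) = (\<Sum>j\<in>S. if P j then 1 else 0)"
proof -
  assume "finite S"
  then have "(\<Sum>j\<in>S. if P j then 1 else 0) = (\<Sum>j\<in>{j\<in>S. P j}. (1::real))"
    by (rule sum.inter_filter[symmetric])
  then show ?thesis by simp
qed

lemma cs_sum: "finite S \<Longrightarrow> real (cs S v b) = (\<Sum>j\<in>S. if 1 \<le> v j \<and> v j \<le> b then 1 else 0)"
  by (simp add: cs_card card_filter_sum)

lemma cs_mono: "finite S \<Longrightarrow> b \<le> b' \<Longrightarrow> cs S v b \<le> cs S v b'"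
  by (simp add: cs_card) (intro card_mono, auto)

lemma cs_le_card: "finite S \<Longrightarrow> cs S v b \<le> card S"
  by (simp add: cs_card card_mono)

lemma cs_Suc: "cs S v (Suc b) = cs S v b + cnt S v (Suc b)"
  by (simp add: cs_def)

lemma cs_Un: "finite S \<Longrightarrow> finite T \<Longrightarrow> S \<inter> T = {} \<Longrightarrow> cs (S \<union> T) v b = cs S v b + cs T v b"
proof -
  assume a: "finite S" "finite T" "S \<inter> T = {}"
  have "{j\<in>S\<union>T. 1 \<le> v j \<and> v j \<le> b} = {j\<in>S. 1 \<le> v j \<and> v j \<le> b} \<union> {j\<in>T. 1 \<le> v j \<and> v j \<le> b}" by auto
  then show ?thesis using a by (simp add: cs_card card_Un_disjoint disjoint_iff)
qed

lemma cs_cong: "(\<And>j. j \<in> S \<Longrightarrow> v j = v' j) \<Longrightarrow> cs S v b = cs S v' b"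
  unfolding cs_def cnt_def by (intro sum.cong refl arg_cong[where f=card]) auto

lemma cnt_cong: "(\<And>j. j \<in> S \<Longrightarrow> v j = v' j) \<Longrightarrow> cnt S v l = cnt S v' l"
  unfolding cnt_def by (intro arg_cong[where f=card]) auto

lemma cs_plus_top: "finite S \<Longrightarrow> cs S v b + cnt S v (Suc b) \<le> card S"
  using cs_le_card[of S v "Suc b"] by (simp add: cs_Suc)

lemma cs_full: "finite S \<Longrightarrow> (\<And>j. j \<in> S \<Longrightarrow> 1 \<le> v j \<and> v j \<le> Suc b) \<Longrightarrow> cs S v b + cnt S v (Suc b) = card S"
proof -
  assume a: "finite S" "\<And>j. j \<in> S \<Longrightarrow> 1 \<le> v j \<and> v j \<le> Suc b"
  have "{j\<in>S. 1 \<le> v j \<and> v j \<le> Suc b} = S" using a(2) by auto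
  then have "cs S v (Suc b) = card S" using a(1) by (simp add: cs_card)
  then show ?thesis by (simp add: cs_Suc)
qed

lemma ivt_down:
  fixes g :: "nat \<Rightarrow> int"
  assumes "a \<le> b" "g a \<ge> 0" "g b \<le> 0" "\<And>i. g (Suc i) \<ge> g i - 1"
  shows "\<exists>i\<in>{a..b}. g i = 0 \<and> int i \<ge> int a + g a"
  using assms(1,2)
proof (induction "b - a" arbitrary: a)
  case 0
  then have "a = b" by simp
  then show ?case using assms(3) 0 by auto
next
  case (Suc d)
  show ?case
  proof (cases "g a = 0")
    case True then show ?thesis using Suc.prems by auto
  next
    case False
    then have "g a > 0" using Suc.prems by auto
    have "g (Suc a) \<ge> 0" using assms(4)[of a] \<open>g a > 0\<close> by linarith
    moreover have "d = b - Suc a" "Suc a \<le> b" using Suc.hyps by auto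
    ultimately obtain i where "i\<in>{Suc a..b}" "g i = 0" "int i \<ge> int (Suc a) + g (Suc a)"
      using Suc.hyps(1) by blast
    then show ?thesis using assms(4)[of a] by (intro bexI[of _ i]) auto
  qed
qed


lemma sum_PiE_remove:
  assumes "finite I" "u \<in> I"
  shows "(\<Sum>v\<in>PiE I B. h v) = (\<Sum>a\<in>B u. \<Sum>y\<in>PiE (I-{u}) B. h (y(u:=a)))"
proof -
  have I: "I = insert u (I - {u})" using assms by auto
  have eq: "PiE I B = (\<lambda>(y, g). g(u := y)) ` (B u \<times> PiE (I-{u}) B)"
    using PiE_insert_eq[of u "I-{u}" B] assms(2) by (simp add: insert_absorb)
  have "(\<Sum>v\<in>PiE I B. h v) = (\<Sum>v\<in>(\<lambda>(y, g). g(u := y)) ` (B u \<times> PiE (I-{u}) B). h v)"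
    by (subst eq) (rule refl)
  also have "\<dots> = (\<Sum>z\<in>B u \<times> PiE (I-{u}) B. h ((\<lambda>(y, g). g(u := y)) z))"
  proof (rule sum.reindex[unfolded comp_def])
    show "inj_on (\<lambda>(y, g). g(u := y)) (B u \<times> Pi\<^sub>E (I - {u}) B)"
    proof (rule inj_onI, clarify)
      fix a g a' g' assume h: "g(u := a) = g'(u := a')" "g \<in> Pi\<^sub>E (I - {u}) B" "g' \<in> Pi\<^sub>E (I - {u}) B"
      then have "a = a'" by (metis fun_upd_same)
      moreover have "g = g'"
      proof
        fix x show "g x = g' x"
        proof (cases "x = u")
          case True then show ?thesis using h(2,3) by (auto simp: PiE_def extensional_def)
        next
          case False then show ?thesis using h(1) by (metis fun_upd_other)
        qed
      qed
      ultimately show "a = a' \<and> g = g'" by simp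
    qed
  qed
  also have "\<dots> = (\<Sum>a\<in>B u. \<Sum>y\<in>PiE (I-{u}) B. h (y(u:=a)))"
    by (simp add: sum.cartesian_product case_prod_unfold)
  finally show ?thesis .
qed

definition mg :: "nat set \<Rightarrow> (nat \<Rightarrow> nat) \<Rightarrow> (nat \<Rightarrow> nat) \<Rightarrow> nat \<Rightarrow> nat" where
  "mg S x y = (\<lambda>j. if j \<in> S then x j else y j)"

lemma sum_PiE_split:
  assumes "finite S" "finite T" "S \<inter> T = {}"
  shows "(\<Sum>v\<in>PiE (S \<union> T) B. h v) = (\<Sum>x\<in>PiE S B. \<Sum>y\<in>PiE T B. h (mg S x y))"
proof -
  have "(\<Sum>x\<in>PiE S B. \<Sum>y\<in>PiE T B. h (mg S x y)) = (\<Sum>(x,y)\<in>PiE S B \<times> PiE T B. h (mg S x y))"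
    by (simp add: sum.cartesian_product)
  also have "\<dots> = (\<Sum>v\<in>PiE (S \<union> T) B. h v)"
    by (rule sum.reindex_bij_witness[of _ "\<lambda>v. (restrict v S, restrict v T)" "\<lambda>(x,y). mg S x y"])
       (use assms(3) in \<open>auto simp: mg_def fun_eq_iff PiE_def extensional_def Pi_def split: prod.splits\<close>)
  finally show ?thesis by simp
qed

definition dep :: "nat set \<Rightarrow> ((nat \<Rightarrow> nat) \<Rightarrow> 'b) \<Rightarrow> bool" where
  "dep S f \<longleftrightarrow> (\<forall>v v'. (\<forall>j\<in>S. v j = v' j) \<longrightarrow> f v = f v')"

lemma depD: "dep S f \<Longrightarrow> (\<And>j. j \<in> S \<Longrightarrow> v j = v' j) \<Longrightarrow> f v = f v'"
  unfolding dep_def by blast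

locale fw =
  fixes N c :: nat and H0 H1 :: "nat set" and pr :: "nat \<Rightarrow> nat \<Rightarrow> real"
  assumes N1: "N \<ge> 1" and HU: "H0 \<union> H1 = {1..N}" and HI: "H0 \<inter> H1 = {}"
    and c1: "1 \<le> c" and cN0: "c \<le> card H0"
    and pr_nn: "\<And>j y. pr j y \<ge> 0"
    and pr_sum: "\<And>j. j \<in> {1..N} \<Longrightarrow> (\<Sum>y\<in>{0..N+1}. pr j y) = 1"
    and pr_unif: "\<And>j y. j \<in> H0 \<Longrightarrow> 1 \<le> y \<Longrightarrow> y \<le> N \<Longrightarrow> pr j y = pr j 1"
    and pr_top: "\<And>j. j \<in> H0 \<Longrightarrow> pr j (N+1) > 0"
    and pr0: "\<And>j. j \<in> H0 \<Longrightarrow> pr j 0 = 0"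
begin

abbreviation II where "II \<equiv> {1..N}"
abbreviation VV :: "nat set" where "VV \<equiv> {0..N+1}"
abbreviation PP where "PP \<equiv> PiE II (\<lambda>_. VV)"

definition WS :: "nat set \<Rightarrow> (nat \<Rightarrow> nat) \<Rightarrow> real" where
  "WS S v = (\<Prod>j\<in>S. pr j (v j))"

abbreviation W where "W \<equiv> WS II"

lemma fin0: "finite H0" and fin1: "finite H1"
  using HU finite_subset[of H0 II] finite_subset[of H1 II] by auto

lemma WS_nn: "WS S v \<ge> 0"
  unfolding WS_def by (intro prod_nonneg pr_nn)

lemma WS_sum: "S \<subseteq> II \<Longrightarrow> (\<Sum>y\<in>PiE S (\<lambda>_. VV). WS S y) = 1"
proof -
  assume S: "S \<subseteq> II"
  then have fS: "finite S" using finite_subset by blast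
  have "(\<Sum>y\<in>PiE S (\<lambda>_. VV). WS S y) = (\<Prod>j\<in>S. \<Sum>y\<in>VV. pr j y)"
    unfolding WS_def using fS by (subst prod_sum_PiE) auto
  also have "\<dots> = 1" using S pr_sum by (intro prod.neutral) auto
  finally show ?thesis .
qed

lemma sum_W_split:
  "(\<Sum>v\<in>PP. W v * h v) = (\<Sum>x\<in>PiE H0 (\<lambda>_. VV). \<Sum>y\<in>PiE H1 (\<lambda>_. VV). WS H0 x * WS H1 y * h (mg H0 x y))"
proof -
  have "(\<Sum>v\<in>PP. W v * h v) = (\<Sum>v\<in>PiE (H0 \<union> H1) (\<lambda>_. VV). W v * h v)" using HU by simp
  also have "\<dots> = (\<Sum>x\<in>PiE H0 (\<lambda>_. VV). \<Sum>y\<in>PiE H1 (\<lambda>_. VV). W (mg H0 x y) * h (mg H0 x y))"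
    by (rule sum_PiE_split[OF fin0 fin1 HI])
  also have "\<dots> = (\<Sum>x\<in>PiE H0 (\<lambda>_. VV). \<Sum>y\<in>PiE H1 (\<lambda>_. VV). WS H0 x * WS H1 y * h (mg H0 x y))"
  proof (intro sum.cong refl)
    fix x y
    have "W (mg H0 x y) = WS (H0 \<union> H1) (mg H0 x y)" using HU by simp
    also have "\<dots> = WS H0 (mg H0 x y) * WS H1 (mg H0 x y)"
      unfolding WS_def using fin0 fin1 HI by (rule prod.union_disjoint)
    also have "WS H0 (mg H0 x y) = WS H0 x" unfolding WS_def mg_def by simp
    also have "WS H1 (mg H0 x y) = WS H1 y" unfolding WS_def mg_def using HI by (intro prod.cong) auto
    finally show "W (mg H0 x y) * h (mg H0 x y) = WS H0 x * WS H1 y * h (mg H0 x y)" by simp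
  qed
  finally show ?thesis .
qed

lemma factor:
  assumes f: "dep H0 f" and g: "dep H1 g"
  shows "(\<Sum>v\<in>PP. W v * (f v * g v)) = (\<Sum>v\<in>PP. W v * f v) * (\<Sum>v\<in>PP. W v * g v)"
proof -
  have mf: "f (mg H0 x y) = f x" for x y by (rule depD[OF f]) (auto simp: mg_def)
  have mgg: "g (mg H0 x y) = g y" for x y by (rule depD[OF g]) (use HI in \<open>auto simp: mg_def\<close>)
  have s0: "(\<Sum>x\<in>PiE H0 (\<lambda>_. VV). WS H0 x) = 1" and s1: "(\<Sum>y\<in>PiE H1 (\<lambda>_. VV). WS H1 y) = 1"
    using WS_sum HU by auto
  have "(\<Sum>v\<in>PP. W v * (f v * g v)) = (\<Sum>x\<in>PiE H0 (\<lambda>_. VV). \<Sum>y\<in>PiE H1 (\<lambda>_. VV). WS H0 x * WS H1 y * (f (mg H0 x y) * g (mg H0 x y)))"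
    by (rule sum_W_split)
  also have "\<dots> = (\<Sum>x\<in>PiE H0 (\<lambda>_. VV). \<Sum>y\<in>PiE H1 (\<lambda>_. VV). (WS H0 x * f x) * (WS H1 y * g y))"
    by (simp add: mf mgg mult_ac)
  also have "\<dots> = (\<Sum>x\<in>PiE H0 (\<lambda>_. VV). WS H0 x * f x) * (\<Sum>y\<in>PiE H1 (\<lambda>_. VV). WS H1 y * g y)"
    by (simp add: sum_product)
  finally have 1: "(\<Sum>v\<in>PP. W v * (f v * g v)) = \<dots>" .
  have "(\<Sum>v\<in>PP. W v * f v) = (\<Sum>x\<in>PiE H0 (\<lambda>_. VV). \<Sum>y\<in>PiE H1 (\<lambda>_. VV). WS H0 x * WS H1 y * f (mg H0 x y))"
    by (rule sum_W_split)
  also have "\<dots> = (\<Sum>x\<in>PiE H0 (\<lambda>_. VV). \<Sum>y\<in>PiE H1 (\<lambda>_. VV). (WS H0 x * f x) * WS H1 y)"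
    by (simp add: mf mult_ac)
  also have "\<dots> = (\<Sum>x\<in>PiE H0 (\<lambda>_. VV). WS H0 x * f x)"
    by (simp add: sum_distrib_left[symmetric] s1[simplified])
  finally have 2: "(\<Sum>v\<in>PP. W v * f v) = \<dots>" .
  have "(\<Sum>v\<in>PP. W v * g v) = (\<Sum>x\<in>PiE H0 (\<lambda>_. VV). \<Sum>y\<in>PiE H1 (\<lambda>_. VV). WS H0 x * WS H1 y * g (mg H0 x y))"
    by (rule sum_W_split)
  also have "\<dots> = (\<Sum>x\<in>PiE H0 (\<lambda>_. VV). \<Sum>y\<in>PiE H1 (\<lambda>_. VV). WS H0 x * (WS H1 y * g y))"
    by (simp add: mgg mult_ac)
  also have "\<dots> = (\<Sum>y\<in>PiE H1 (\<lambda>_. VV). WS H1 y * g y)"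
    by (simp only: sum_product[symmetric] s0 mult_1_left)
  finally have 3: "(\<Sum>v\<in>PP. W v * g v) = \<dots>" .
  show ?thesis using 1 2 3 by simp
qed

end


context fw begin

definition nn :: nat where "nn = card H1 + c"
definition Av :: "(nat \<Rightarrow> nat) \<Rightarrow> bool" where "Av v \<longleftrightarrow> c \<le> cnt H0 v (N+1)"
definition E1v :: "(nat \<Rightarrow> nat) \<Rightarrow> bool" where "E1v v \<longleftrightarrow> cs H1 v c = card H1"
definition GS :: "(nat \<Rightarrow> nat) \<Rightarrow> nat set" where "GS v = {i\<in>{c..N}. cs H0 v i + nn = i}"
definition G :: "(nat \<Rightarrow> nat) \<Rightarrow> nat" where "G v = Max (GS v)"
definition K :: "(nat \<Rightarrow> nat) \<Rightarrow> nat" where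
  "K v = Max {i\<in>{c..N}. int (cs II v i) = int i - int c}"

lemma card_HU: "card H0 + card H1 = N"
  using card_Un_disjoint[OF fin0 fin1 HI] HU by simp

lemma nn_le: "nn \<le> N" and c_le_nn: "c \<le> nn"
  using card_HU cN0 unfolding nn_def by auto

lemma GS_ex:
  assumes "Av v"
  shows "\<exists>i\<in>GS v. i \<ge> nn + cs H0 v nn"
proof -
  define g where "g i = int (cs H0 v i) + int nn - int i" for i
  have top: "cs H0 v N + cnt H0 v (Suc N) \<le> card H0" by (rule cs_plus_top[OF fin0])
  have "g nn \<ge> 0" unfolding g_def by simp
  moreover have "g N \<le> 0" using top assms card_HU unfolding g_def Av_def nn_def by simp
  moreover have "g (Suc i) \<ge> g i - 1" for i using cs_mono[OF fin0, of i "Suc i" v] unfolding g_def by simp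
  ultimately obtain i where i: "i\<in>{nn..N}" "g i = 0" "int i \<ge> int nn + g nn"
    using ivt_down[of nn N g] nn_le by blast
  then have "i \<in> GS v" unfolding GS_def g_def using c_le_nn by auto
  moreover have "i \<ge> nn + cs H0 v nn" using i(3) unfolding g_def by simp
  ultimately show ?thesis by blast
qed

lemma G_props:
  assumes "Av v"
  shows "G v \<in> GS v" "G v \<ge> nn + cs H0 v nn" "c \<le> G v" "G v \<le> N" "cs H0 v (G v) + nn = G v"
proof -
  have fin: "finite (GS v)" unfolding GS_def by auto
  obtain i where i: "i \<in> GS v" "i \<ge> nn + cs H0 v nn" using GS_ex[OF assms] by blast
  show g: "G v \<in> GS v" unfolding G_def using fin i(1) by (intro Max_in) auto
  show "G v \<ge> nn + cs H0 v nn" using i Max_ge[OF fin i(1)] unfolding G_def by simp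
  show "c \<le> G v" "G v \<le> N" "cs H0 v (G v) + nn = G v" using g unfolding GS_def by auto
qed

lemma G_less_iff:
  assumes "Av v"
  shows "G v < i \<longleftrightarrow> (\<forall>k\<in>{i..N}. c \<le> k \<longrightarrow> cs H0 v k + nn \<noteq> k)"
proof -
  have fin: "finite (GS v)" unfolding GS_def by auto
  have "G v < i \<longleftrightarrow> (\<forall>k\<in>GS v. k < i)"
    unfolding G_def using fin G_props(1)[OF assms] by (subst Max_less_iff) auto
  also have "\<dots> \<longleftrightarrow> (\<forall>k\<in>{i..N}. c \<le> k \<longrightarrow> cs H0 v k + nn \<noteq> k)"
    unfolding GS_def by (auto simp: not_less)
  finally show ?thesis .
qed

lemma dep_Av: "dep H0 Av"
  unfolding dep_def Av_def using cnt_cong by metis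

lemma dep_G: "dep H0 G"
proof -
  have "GS v = GS v'" if "\<forall>j\<in>H0. v j = v' j" for v v'
    unfolding GS_def using cs_cong[of H0 v v'] that by auto
  then show ?thesis unfolding dep_def G_def by metis
qed

lemma dep_cs0: "dep H0 (\<lambda>v. cs H0 v b)"
  unfolding dep_def using cs_cong by metis

lemma dep_E1: "dep H1 E1v"
  unfolding dep_def E1v_def using cs_cong by metis

lemma K_props:
  assumes "Av v"
  shows "c \<le> K v" "K v \<le> N"
proof -
  let ?S = "{i\<in>{c..N}. int (cs II v i) = int i - int c}"
  define g where "g i = int (cs II v i) + int c - int i" for i
  have fin: "finite ?S" by auto
  have top: "cs II v N + cnt II v (Suc N) \<le> card II" by (rule cs_plus_top) auto
  have "cnt H0 v (Suc N) \<le> cnt II v (Suc N)" unfolding cnt_def using HU by (intro card_mono) auto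
  then have "g N \<le> 0" using top assms unfolding g_def Av_def by simp
  moreover have "g c \<ge> 0" unfolding g_def by simp
  moreover have "g (Suc i) \<ge> g i - 1" for i using cs_mono[of II i "Suc i" v] unfolding g_def by simp
  moreover have "c \<le> N" using cN0 card_HU by simp
  ultimately obtain i where i: "i\<in>{c..N}" "g i = 0" using ivt_down[of c N g] by blast
  then have "i \<in> ?S" unfolding g_def by auto
  then have "K v \<in> ?S" unfolding K_def using fin by (intro Max_in) auto
  then show "c \<le> K v" "K v \<le> N" by auto
qed

lemma K_eq_G:
  assumes "Av v" "E1v v"
  shows "K v = G v"
proof -
  have "{i\<in>{c..N}. int (cs II v i) = int i - int c} = GS v"
  proof -
    have "cs H1 v i = card H1" if "c \<le> i" for i
      using cs_mono[OF fin1 that, of v] cs_le_card[OF fin1, of v i] assms(2) unfolding E1v_def by simp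
    moreover have "cs II v i = cs H0 v i + cs H1 v i" for i using cs_Un[OF fin0 fin1 HI] HU by metis
    ultimately have "i \<in> {i\<in>{c..N}. int (cs II v i) = int i - int c} \<longleftrightarrow> i \<in> GS v" for i
    proof -
      assume h1: "\<And>i. c \<le> i \<Longrightarrow> cs H1 v i = card H1" and h2: "\<And>i. cs II v i = cs H0 v i + cs H1 v i"
      show ?thesis
      proof (cases "c \<le> i \<and> i \<le> N")
        case True
        then show ?thesis using h1[of i] h2[of i] unfolding GS_def nn_def by auto
      next
        case False then show ?thesis unfolding GS_def by auto
      qed
    qed
    then show ?thesis by blast
  qed
  then show ?thesis unfolding K_def G_def by simp
qed

end


lemma tele: fixes a :: "nat \<Rightarrow> real" shows "g \<le> N \<Longrightarrow> (\<Sum>i\<in>{Suc g..N}. a (i-1) - a i) = a g - (a N :: real)"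
proof (induction N)
  case 0 then show ?case by simp
next
  case (Suc N)
  show ?case
  proof (cases "g \<le> N")
    case True
    have "{Suc g..Suc N} = insert (Suc N) {Suc g..N}" using True by auto
    then show ?thesis using Suc True by simp
  next
    case False
    then have "g = Suc N" using Suc by simp
    then show ?thesis by simp
  qed
qed

lemma telescope:
  fixes a :: "nat \<Rightarrow> real" and g N :: nat
  assumes "1 \<le> g" "g \<le> N"
  shows "a g - (a N :: real) = (\<Sum>i\<in>{2..N}. if g < i then a (i-1) - a i else 0)"
proof -
  have "(\<Sum>i\<in>{2..N}. if g < i then a (i-1) - a i else 0) = (\<Sum>i\<in>{i\<in>{2..N}. g < i}. a (i-1) - a i)"
    by (rule sum.inter_filter[symmetric]) auto
  also have "{i\<in>{2..N}. g < i} = {Suc g..N}" using assms by auto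
  finally show ?thesis using tele[OF assms(2)] by simp
qed

context fw begin

definition Phi :: "nat \<Rightarrow> (nat \<Rightarrow> nat) \<Rightarrow> bool" where
  "Phi i v \<longleftrightarrow> Av v \<and> (\<forall>k\<in>{i..N}. c \<le> k \<longrightarrow> cs H0 v k + nn \<noteq> k)"

definition psi :: "nat \<Rightarrow> nat \<Rightarrow> real" where
  "psi i a = (if 1 \<le> a \<and> a \<le> i - 1 then 1 else 0) / real (i - 1) - (if 1 \<le> a \<and> a \<le> i then 1 else 0) / real i"

lemma sum_pr_ind:
  assumes "u \<in> H0" "m \<le> N"
  shows "(\<Sum>a\<in>VV. pr u a * (if 1 \<le> a \<and> a \<le> m then 1 else 0)) = real m * pr u 1"
proof -
  have "(\<Sum>a\<in>VV. pr u a * (if 1 \<le> a \<and> a \<le> m then 1 else 0)) = (\<Sum>a\<in>VV. if 1 \<le> a \<and> a \<le> m then pr u a else 0)"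
    by (intro sum.cong) auto
  also have "\<dots> = (\<Sum>a\<in>{a\<in>VV. 1 \<le> a \<and> a \<le> m}. pr u a)" by (rule sum.inter_filter[symmetric]) auto
  also have "{a\<in>VV. 1 \<le> a \<and> a \<le> m} = {1..m}" using assms by auto
  also have "(\<Sum>a\<in>{1..m}. pr u a) = (\<Sum>a\<in>{1..m}. pr u 1)"
  proof (rule sum.cong[OF refl])
    fix a assume "a \<in> {1..m}"
    then show "pr u a = pr u 1" using assms by (intro pr_unif) auto
  qed
  finally show ?thesis by simp
qed

lemma sum_psi:
  assumes "u \<in> H0" "2 \<le> i" "i \<le> N"
  shows "(\<Sum>a\<in>VV. pr u a * psi i a) = 0"
proof -
  have "(\<Sum>a\<in>VV. pr u a * psi i a) = (\<Sum>a\<in>VV. pr u a * (if 1 \<le> a \<and> a \<le> i - 1 then 1 else 0)) / real (i-1)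
     - (\<Sum>a\<in>VV. pr u a * (if 1 \<le> a \<and> a \<le> i then 1 else 0)) / real i"
  proof -
    have "pr u a * psi i a = pr u a * (if 1 \<le> a \<and> a \<le> i - 1 then 1 else 0) / real (i-1)
        - pr u a * (if 1 \<le> a \<and> a \<le> i then 1 else 0) / real i" for a
      unfolding psi_def by (simp only: right_diff_distrib times_divide_eq_right)
    then show ?thesis by (simp only: sum_subtractf sum_divide_distrib[symmetric])
  qed
  also have "\<dots> = real (i-1) * pr u 1 / real (i-1) - real i * pr u 1 / real i"
    using sum_pr_ind[OF assms(1), of "i-1"] sum_pr_ind[OF assms(1), of i] assms by (simp only:)
  also have "\<dots> = 0" using assms by simp
  finally show ?thesis .
qed

lemma t_decomp:
  "real (cs H0 v (i-1)) / real (i-1) - real (cs H0 v i) / real i = (\<Sum>u\<in>H0. psi i (v u))"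
  unfolding psi_def by (simp add: cs_sum[OF fin0] sum_subtractf sum_divide_distrib)

lemma Phi_inv:
  assumes "u \<in> H0" "i \<le> N" "a \<in> {1..i}" "b \<in> {1..i}"
  shows "Phi i (y(u:=a)) = Phi i (y(u:=b))"
proof -
  have "{j\<in>H0. (y(u:=a)) j = N+1} = {j\<in>H0. (y(u:=b)) j = N+1}"
    using assms by auto
  then have "cnt H0 (y(u:=a)) (N+1) = cnt H0 (y(u:=b)) (N+1)"
    unfolding cnt_def by simp
  moreover have "cs H0 (y(u:=a)) k = cs H0 (y(u:=b)) k" if "i \<le> k" for k
  proof -
    have "{j\<in>H0. 1 \<le> (y(u:=a)) j \<and> (y(u:=a)) j \<le> k} = {j\<in>H0. 1 \<le> (y(u:=b)) j \<and> (y(u:=b)) j \<le> k}"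
      using assms that by auto
    then show ?thesis unfolding cs_card[OF fin0] by simp
  qed
  ultimately show ?thesis unfolding Phi_def Av_def by auto
qed

lemma W_upd:
  assumes "u \<in> II"
  shows "W (y(u:=a)) = pr u a * WS (II - {u}) y"
proof -
  have "W (y(u:=a)) = pr u ((y(u:=a)) u) * WS (II - {u}) (y(u:=a))"
    unfolding WS_def using assms by (subst prod.remove) auto
  also have "WS (II - {u}) (y(u:=a)) = WS (II - {u}) y" unfolding WS_def by (intro prod.cong) auto
  finally show ?thesis by (simp only: fun_upd_same)
qed

lemma coord_zero:
  assumes "u \<in> H0" "2 \<le> i" "i \<le> N"
  shows "(\<Sum>v\<in>PP. W v * (if Phi i v then psi i (v u) else 0)) = 0"
proof -
  have uI: "u \<in> II" using assms(1) HU by auto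
  define C where "C y = WS (II - {u}) y * (if Phi i (y(u:=1)) then 1 else 0)" for y
  have eq: "W (y(u:=a)) * (if Phi i (y(u:=a)) then psi i ((y(u:=a)) u) else 0) = (pr u a * psi i a) * C y" for y a
  proof (cases "a \<in> {1..i}")
    case True
    have "Phi i (y(u:=a)) = Phi i (y(u:=1))" using Phi_inv[OF assms(1,3) True, of 1] assms by auto
    then show ?thesis unfolding C_def W_upd[OF uI] by simp
  next
    case False
    then have "psi i a = 0" unfolding psi_def by auto
    then show ?thesis unfolding C_def W_upd[OF uI] by simp
  qed
  have "(\<Sum>v\<in>PP. W v * (if Phi i v then psi i (v u) else 0))
      = (\<Sum>a\<in>VV. \<Sum>y\<in>PiE (II-{u}) (\<lambda>_. VV). W (y(u:=a)) * (if Phi i (y(u:=a)) then psi i ((y(u:=a)) u) else 0))"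
    by (rule sum_PiE_remove[OF _ uI]) simp
  also have "\<dots> = (\<Sum>a\<in>VV. \<Sum>y\<in>PiE (II-{u}) (\<lambda>_. VV). (pr u a * psi i a) * C y)"
    by (simp only: eq)
  also have "\<dots> = (\<Sum>a\<in>VV. pr u a * psi i a) * (\<Sum>y\<in>PiE (II-{u}) (\<lambda>_. VV). C y)"
    by (rule sum_product[symmetric])
  also have "\<dots> = 0" using sum_psi[OF assms] by simp
  finally show ?thesis .
qed

lemma core:
  "(\<Sum>v\<in>PP. W v * (if Av v then real (cs H0 v (G v)) / real (G v) - real (cs H0 v N) / real N else 0)) = 0"
proof -
  have pt: "(if Av v then real (cs H0 v (G v)) / real (G v) - real (cs H0 v N) / real N else 0)
     = (\<Sum>i\<in>{2..N}. \<Sum>u\<in>H0. if Phi i v then psi i (v u) else 0)" for v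
  proof (cases "Av v")
    case True
    have g1: "1 \<le> G v" "G v \<le> N" using G_props[OF True] c1 by auto
    have "real (cs H0 v (G v)) / real (G v) - real (cs H0 v N) / real N
       = (\<Sum>i\<in>{2..N}. if G v < i then real (cs H0 v (i-1)) / real (i-1) - real (cs H0 v i) / real i else 0)"
      using telescope[OF g1, of "\<lambda>k. real (cs H0 v k) / real k"] by simp
    also have "\<dots> = (\<Sum>i\<in>{2..N}. \<Sum>u\<in>H0. if Phi i v then psi i (v u) else 0)"
    proof (intro sum.cong refl)
      fix i
      have "G v < i \<longleftrightarrow> Phi i v" unfolding Phi_def using G_less_iff[OF True] True by simp
      then show "(if G v < i then real (cs H0 v (i-1)) / real (i-1) - real (cs H0 v i) / real i else 0)
          = (\<Sum>u\<in>H0. if Phi i v then psi i (v u) else 0)"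
        using t_decomp[of v i] by simp
    qed
    finally show ?thesis using True by simp
  next
    case False
    then show ?thesis unfolding Phi_def by simp
  qed
  have "(\<Sum>v\<in>PP. W v * (if Av v then real (cs H0 v (G v)) / real (G v) - real (cs H0 v N) / real N else 0))
      = (\<Sum>v\<in>PP. \<Sum>i\<in>{2..N}. \<Sum>u\<in>H0. W v * (if Phi i v then psi i (v u) else 0))"
    by (simp add: pt sum_distrib_left)
  also have "\<dots> = (\<Sum>i\<in>{2..N}. \<Sum>v\<in>PP. \<Sum>u\<in>H0. W v * (if Phi i v then psi i (v u) else 0))"
    by (rule sum.swap)
  also have "\<dots> = (\<Sum>i\<in>{2..N}. \<Sum>u\<in>H0. \<Sum>v\<in>PP. W v * (if Phi i v then psi i (v u) else 0))"
    by (rule sum.cong[OF refl sum.swap])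
  also have "\<dots> = (\<Sum>i\<in>{2..N}. \<Sum>u\<in>H0. 0)" by (intro sum.cong refl coord_zero) auto
  also have "\<dots> = 0" by simp
  finally show ?thesis .
qed

end


lemma CS_weighted:
  fixes w x :: "'b \<Rightarrow> real"
  assumes "finite S" "\<And>s. s \<in> S \<Longrightarrow> w s \<ge> 0" "\<And>s. s \<in> S \<Longrightarrow> w s \<noteq> 0 \<Longrightarrow> x s > 0"
  shows "(\<Sum>s\<in>S. w s)^2 \<le> (\<Sum>s\<in>S. w s * x s) * (\<Sum>s\<in>S. w s / x s)"
proof -
  define f where "f s = sqrt (w s * x s)" for s
  define g where "g s = sqrt (w s / x s)" for s
  have fg: "f s * g s = w s" if "s \<in> S" for s
  proof (cases "w s = 0")
    case True then show ?thesis unfolding f_def g_def by simp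
  next
    case False
    then have "x s > 0" "w s \<ge> 0" using assms that by auto
    have "f s * g s = sqrt (w s * x s * (w s / x s))" unfolding f_def g_def by (rule real_sqrt_mult[symmetric])
    also have "w s * x s * (w s / x s) = (w s)^2" using \<open>x s > 0\<close> by (simp add: power2_eq_square)
    finally show ?thesis using \<open>w s \<ge> 0\<close> by simp
  qed
  have f2: "(f s)^2 = w s * x s" if "s \<in> S" for s
  proof (cases "w s = 0")
    case True then show ?thesis unfolding f_def by simp
  next
    case False
    then have "x s > 0" "w s \<ge> 0" using assms that by auto
    then show ?thesis unfolding f_def by simp
  qed
  have g2: "(g s)^2 = w s / x s" if "s \<in> S" for s
  proof (cases "w s = 0")
    case True then show ?thesis unfolding g_def by simp
  next
    case False
    then have "x s > 0" "w s \<ge> 0" using assms that by auto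
    then show ?thesis unfolding g_def by simp
  qed
  have "(\<Sum>s\<in>S. w s) = (\<Sum>s\<in>S. f s * g s)" using fg by simp
  then have "(\<Sum>s\<in>S. w s)^2 \<le> (\<Sum>s\<in>S. (f s)^2) * (\<Sum>s\<in>S. (g s)^2)"
    using Cauchy_Schwarz_ineq_sum[of f g S] by simp
  also have "\<dots> = (\<Sum>s\<in>S. w s * x s) * (\<Sum>s\<in>S. w s / x s)" using f2 g2 by simp
  finally show ?thesis .
qed

context fw begin

definition aa where "aa = (\<Sum>v\<in>PP. W v * (if Av v then 1 else 0))"
definition ee where "ee = (\<Sum>v\<in>PP. W v * (if E1v v then 1 else 0))"
definition TT where "TT = (\<Sum>v\<in>PP. W v * (if Av v then real (cs H0 v N) / real N else 0))"
definition gg where "gg = (\<Sum>v\<in>PP. W v * (if Av v then real (G v) else 0))"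
definition hh where "hh = (\<Sum>v\<in>PP. W v * (if Av v then real c / (real c + real (card H1) + real (cs H0 v nn)) else 0))"

lemma W_nn: "W v \<ge> 0" by (rule WS_nn)
lemma W_sum1: "(\<Sum>v\<in>PP. W v) = 1" using WS_sum by simp

lemma finPP: "finite PP" by (auto intro!: finite_PiE)

lemma sum_ind_le1: "(\<Sum>v\<in>PP. W v * (if P v then 1 else 0)) \<le> 1"
proof -
  have "(\<Sum>v\<in>PP. W v * (if P v then 1 else 0)) \<le> (\<Sum>v\<in>PP. W v)"
    using W_nn by (intro sum_mono) auto
  then show ?thesis using W_sum1 by simp
qed

lemma ee_bounds: "0 \<le> ee" "ee \<le> 1"
  unfolding ee_def using sum_ind_le1 W_nn by (auto intro!: sum_nonneg)

lemma aa_le1: "aa \<le> 1" unfolding aa_def by (rule sum_ind_le1)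

lemma aa_pos: "aa > 0"
proof -
  have ex: "\<exists>y\<in>VV. pr j y > 0" if "j \<in> II" for j
  proof (rule ccontr)
    assume "\<not> ?thesis"
    then have "\<forall>y\<in>VV. pr j y = 0"
    proof (intro ballI)
      fix y assume "\<not> (\<exists>y\<in>VV. pr j y > 0)" "y \<in> VV"
      then have "\<not> pr j y > 0" by blast
      then show "pr j y = 0" using pr_nn[of j y] by linarith
    qed
    then have "(\<Sum>y\<in>VV. pr j y) = 0" by simp
    then show False using pr_sum[OF that] by simp
  qed
  define vs where "vs = restrict (\<lambda>j. if j \<in> H0 then N+1 else (SOME y. y\<in>VV \<and> pr j y > 0)) II"
  have vsP: "vs \<in> PP"
  proof -
    have "(SOME y. y\<in>VV \<and> pr j y > 0) \<in> VV" if "j \<in> II" for j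
      using someI_ex[OF ex[OF that, unfolded Bex_def]] by blast
    then show ?thesis unfolding vs_def by auto
  qed
  have "pr j (vs j) > 0" if "j \<in> II" for j
  proof (cases "j \<in> H0")
    case True then show ?thesis using pr_top that unfolding vs_def by auto
  next
    case False
    then show ?thesis using someI_ex[OF ex[OF that, unfolded Bex_def]] that unfolding vs_def by auto
  qed
  then have Wp: "W vs > 0" unfolding WS_def by (intro prod_pos) auto
  have "{j\<in>H0. vs j = N+1} = H0" using HU unfolding vs_def by auto
  then have Avs: "Av vs" unfolding Av_def cnt_def using cN0 by simp
  have "W vs * (if Av vs then 1 else 0) \<le> aa"
    unfolding aa_def using vsP W_nn finPP by (intro member_le_sum) auto
  then show ?thesis using Wp Avs by simp
qed

lemma TT_lt: "TT < aa"
proof -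
  have le: "real (cs H0 v N) / real N \<le> (real (card H0) - real c) / real N" if "Av v" for v
  proof -
    have "cs H0 v N + cnt H0 v (Suc N) \<le> card H0" by (rule cs_plus_top[OF fin0])
    then have "real (cs H0 v N) \<le> real (card H0) - real c" using that unfolding Av_def by simp
    then show ?thesis by (intro divide_right_mono) auto
  qed
  have pt: "W v * (if Av v then real (cs H0 v N) / real N else 0) \<le> W v * (if Av v then 1 else 0) * ((real (card H0) - real c) / real N)" for v
  proof (cases "Av v")
    case True
    then show ?thesis using mult_left_mono[OF le[OF True] W_nn[of v]] by simp
  qed simp
  have "TT \<le> (\<Sum>v\<in>PP. W v * (if Av v then 1 else 0) * ((real (card H0) - real c) / real N))"
    unfolding TT_def using pt by (intro sum_mono) auto
  also have "\<dots> = aa * ((real (card H0) - real c) / real N)"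
    unfolding aa_def by (rule sum_distrib_right[symmetric])
  also have "\<dots> < aa * 1"
  proof (rule mult_strict_left_mono[OF _ aa_pos])
    show "(real (card H0) - real c) / real N < 1" using card_HU c1 N1 by (simp add: divide_less_eq)
  qed
  finally show ?thesis by simp
qed

lemma key_sum: "(\<Sum>v\<in>PP. W v * (if Av v then real nn / real (G v) else 0)) = aa - TT"
proof -
  have pt: "(if Av v then real (cs H0 v (G v)) / real (G v) - real (cs H0 v N) / real N else 0)
    = (if Av v then 1 else 0) - (if Av v then real nn / real (G v) else 0) - (if Av v then real (cs H0 v N) / real N else 0)" for v
  proof (cases "Av v")
    case True
    have "G v > 0" using G_props(3)[OF True] c1 by simp
    have "real (cs H0 v (G v)) = real (G v) - real nn" using G_props(5)[OF True] by simp
    then have "real (cs H0 v (G v)) / real (G v) = 1 - real nn / real (G v)" using \<open>G v > 0\<close>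
      by (simp add: diff_divide_distrib)
    then show ?thesis using True by simp
  qed simp
  have "0 = (\<Sum>v\<in>PP. W v * ((if Av v then 1 else 0) - (if Av v then real nn / real (G v) else 0) - (if Av v then real (cs H0 v N) / real N else 0)))"
    using core by (simp only: pt)
  also have "\<dots> = aa - (\<Sum>v\<in>PP. W v * (if Av v then real nn / real (G v) else 0)) - TT"
    unfolding aa_def TT_def by (simp add: right_diff_distrib sum_subtractf)
  finally show ?thesis by simp
qed

lemma fin_claim2_core: "real nn * aa^2 \<le> gg * (aa - TT)"
proof -
  define w where "w v = W v * (if Av v then 1 else 0)" for v
  define x where "x v = real (G v)" for v
  have w0: "w v \<ge> 0" for v unfolding w_def using W_nn by simp
  have xp: "x v > 0" if "w v \<noteq> 0" for v
  proof -
    have "Av v" using that unfolding w_def by (auto split: if_splits)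
    then have "c \<le> G v" by (rule G_props(3))
    then show ?thesis using c1 unfolding x_def by simp
  qed
  have "aa^2 \<le> (\<Sum>v\<in>PP. w v * x v) * (\<Sum>v\<in>PP. w v / x v)"
    unfolding aa_def using CS_weighted[OF finPP, of w x] w0 xp unfolding w_def by simp
  also have "(\<Sum>v\<in>PP. w v * x v) = gg" unfolding gg_def w_def x_def by (intro sum.cong) auto
  also have "(\<Sum>v\<in>PP. w v / x v) = (aa - TT) / real nn"
  proof -
    have "w v / x v = (W v * (if Av v then real nn / real (G v) else 0)) / real nn" for v
      using c_le_nn c1 by (simp add: w_def x_def)
    then have "(\<Sum>v\<in>PP. w v / x v) = (\<Sum>v\<in>PP. (W v * (if Av v then real nn / real (G v) else 0)) / real nn)"
      by simp
    also have "\<dots> = (\<Sum>v\<in>PP. W v * (if Av v then real nn / real (G v) else 0)) / real nn"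
      by (rule sum_divide_distrib[symmetric])
    finally show ?thesis using key_sum by simp
  qed
  finally have "aa^2 \<le> gg * ((aa - TT) / real nn)" .
  then show ?thesis using c_le_nn c1 by (simp add: field_simps)
qed

lemma ge_gg: "(\<Sum>v\<in>PP. W v * (if Av v then real (K v) else 0)) \<ge> gg * ee"
proof -
  have "gg * ee = (\<Sum>v\<in>PP. W v * ((if Av v then real (G v) else 0) * (if E1v v then 1 else 0)))"
    unfolding gg_def ee_def
  proof (rule factor[symmetric])
    show "dep H0 (\<lambda>v. if Av v then real (G v) else 0)"
      using depD[OF dep_Av] depD[OF dep_G] unfolding dep_def by metis
    show "dep H1 (\<lambda>v. if E1v v then 1 else (0::real))"
      using depD[OF dep_E1] unfolding dep_def by metis
  qed
  also have "\<dots> \<le> (\<Sum>v\<in>PP. W v * (if Av v then real (K v) else 0))"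
    using W_nn K_eq_G by (intro sum_mono mult_left_mono) auto
  finally show ?thesis .
qed

lemma fin_claim2:
  "(\<Sum>v\<in>PP. W v * (if Av v then real (K v) else 0)) / aa \<ge> real nn * ee / (1 - TT / aa)"
proof -
  have a: "aa > 0" using aa_pos .
  have d: "aa - TT > 0" using TT_lt by simp
  have "real nn * ee / (1 - TT / aa) = real nn * ee * aa / (aa - TT)"
    using a by (simp add: field_simps)
  also have "\<dots> \<le> gg * ee / aa"
  proof -
    have "real nn * aa^2 * ee \<le> gg * (aa - TT) * ee"
      using fin_claim2_core ee_bounds by (intro mult_right_mono) auto
    then have "real nn * ee * aa * aa \<le> gg * ee * (aa - TT)" by (simp add: power2_eq_square mult_ac)
    then show ?thesis using a d by (simp add: divide_le_eq le_divide_eq mult_ac)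
  qed
  also have "\<dots> \<le> (\<Sum>v\<in>PP. W v * (if Av v then real (K v) else 0)) / aa"
    using ge_gg a by (intro divide_right_mono) (auto simp: mult.commute)
  finally show ?thesis .
qed

lemma fin_claim1:
  "(\<Sum>v\<in>PP. W v * (if Av v then real c / real (K v) else 0)) \<le> ee * (hh / aa) + 1 - ee"
proof -
  define h where "h v = real c / (real c + real (card H1) + real (cs H0 v nn))" for v
  have pt: "(if Av v then real c / real (K v) else 0) \<le>
     (if Av v then h v else 0) * (if E1v v then 1 else 0) + (if Av v then 1 else 0) - (if Av v then 1 else 0) * (if E1v v then 1 else 0)" for v
  proof (cases "Av v")
    case True
    have Kc: "real c \<le> real (K v)" using K_props(1)[OF True] by simp
    have Kp: "real (K v) > 0" using K_props(1)[OF True] c1 by simp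
    show ?thesis
    proof (cases "E1v v")
      case True2: True
      have "K v \<ge> nn + cs H0 v nn" using K_eq_G[OF True True2] G_props(2)[OF True] by simp
      then have "real c + real (card H1) + real (cs H0 v nn) \<le> real (K v)" unfolding nn_def by simp
      moreover have "real c + real (card H1) + real (cs H0 v nn) > 0" using c1 by simp
      ultimately have "real c / real (K v) \<le> h v" unfolding h_def by (intro divide_left_mono) auto
      then show ?thesis using True True2 by simp
    next
      case False
      have "real c / real (K v) \<le> 1" using Kc Kp by simp
      then show ?thesis using True False by simp
    qed
  qed simp
  have dA: "dep H0 (\<lambda>v. if Av v then h v else 0)"
  proof -
    have "dep H0 h" unfolding h_def using depD[OF dep_cs0] unfolding dep_def by metis
    then show ?thesis using depD[OF dep_Av] unfolding dep_def by metis
  qed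
  have dA1: "dep H0 (\<lambda>v. if Av v then 1 else (0::real))" using depD[OF dep_Av] unfolding dep_def by metis
  have dE: "dep H1 (\<lambda>v. if E1v v then 1 else (0::real))" using depD[OF dep_E1] unfolding dep_def by metis
  have "(\<Sum>v\<in>PP. W v * (if Av v then real c / real (K v) else 0)) \<le>
     (\<Sum>v\<in>PP. W v * ((if Av v then h v else 0) * (if E1v v then 1 else 0)) + W v * (if Av v then 1 else 0) - W v * ((if Av v then 1 else 0) * (if E1v v then 1 else 0)))"
  proof (rule sum_mono)
    fix v
    have "W v * (if Av v then real c / real (K v) else 0) \<le> W v * ((if Av v then h v else 0) * (if E1v v then 1 else 0) + (if Av v then 1 else 0) - (if Av v then 1 else 0) * (if E1v v then 1 else 0))"
      by (rule mult_left_mono[OF pt W_nn])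
    also have "\<dots> = W v * ((if Av v then h v else 0) * (if E1v v then 1 else 0)) + W v * (if Av v then 1 else 0) - W v * ((if Av v then 1 else 0) * (if E1v v then 1 else 0))"
      by (simp only: distrib_left right_diff_distrib)
    finally show "W v * (if Av v then real c / real (K v) else 0) \<le> \<dots>" .
  qed
  also have "\<dots> = hh * ee + aa - aa * ee"
    unfolding sum_subtractf sum.distrib factor[OF dA dE] factor[OF dA1 dE]
    unfolding hh_def aa_def ee_def h_def by simp
  also have "\<dots> \<le> ee * (hh / aa) + 1 - ee"
  proof -
    have h0: "hh \<ge> 0" unfolding hh_def using W_nn by (intro sum_nonneg) auto
    have "hh \<le> hh / aa" using aa_pos aa_le1 h0 by (simp add: le_divide_eq mult_left_le)
    then have "ee * hh \<le> ee * (hh / aa)" using ee_bounds by (intro mult_left_mono) auto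
    moreover have "aa * (1 - ee) \<le> 1 - ee" using mult_left_le_one_le[of "1-ee" aa] aa_pos aa_le1 ee_bounds by simp
    ultimately show ?thesis by (simp add: algebra_simps)
  qed
  finally show ?thesis .
qed

end


lemma load_cong:
  assumes "\<And>j l. j \<in> S \<Longrightarrow> l \<in> {1..N+1} \<Longrightarrow> pv j \<in> bin N q l \<longleftrightarrow> pv' j \<in> bin N q l" "l \<in> {1..N+1}"
  shows "load N q S pv l = load N q S pv' l"
  unfolding load_def using assms by (intro arg_cong[where f=card]) auto

lemma loads_cong:
  assumes "\<And>j l. j \<in> S \<Longrightarrow> l \<in> {1..N+1} \<Longrightarrow> pv j \<in> bin N q l \<longleftrightarrow> pv' j \<in> bin N q l" "b \<le> N+1"
  shows "loads N q S pv 1 b = loads N q S pv' 1 b"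
  unfolding loads_def using assms by (intro sum.cong refl load_cong) auto

lemma ktilde_plus_cong:
  assumes "\<And>j l. j \<in> {1..N} \<Longrightarrow> l \<in> {1..N+1} \<Longrightarrow> pv j \<in> bin N q l \<longleftrightarrow> pv' j \<in> bin N q l" "H0 \<subseteq> {1..N}"
  shows "ktilde_plus N q H0 c pv = ktilde_plus N q H0 c pv'"
proof -
  have L: "loads N q {1..N} pv 1 i = loads N q {1..N} pv' 1 i" if "i \<le> N" for i
    using that by (intro loads_cong assms(1)) auto
  have T: "load N q H0 pv (N+1) = load N q H0 pv' (N+1)"
    using assms by (intro load_cong) auto
  have "ktilde N q pv = ktilde N q pv'"
    unfolding ktilde_def using L by (intro arg_cong[where f=Max]) auto
  moreover have "{i \<in> {c..N}. int (loads N q {1..N} pv 1 i) = int i - int c} = {i \<in> {c..N}. int (loads N q {1..N} pv' 1 i) = int i - int c}"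
    using L by auto
  ultimately show ?thesis unfolding ktilde_plus_def T by simp
qed

lemma load_RV:
  assumes "N \<ge> 1" "0 < q" "q < 1" "l \<in> {1..N+1}"
  shows "load N q S (\<lambda>j. rep N q (v j)) l = cnt S v l"
  unfolding load_def cnt_def using rep_bin[OF assms] by simp

lemma loads_RV:
  assumes "N \<ge> 1" "0 < q" "q < 1" "b \<le> N+1"
  shows "loads N q S (\<lambda>j. rep N q (v j)) 1 b = cs S v b"
  unfolding loads_def cs_def using load_RV[OF assms(1-3)] assms(4) by (intro sum.cong) auto

context setting begin

lemma p_meas: "j \<in> {1..N} \<Longrightarrow> p j \<in> borel_measurable M"
  using ind unfolding indep_vars_def by auto

lemma pr_sum: 
  assumes j: "j \<in> {1..N}"
  shows "(\<Sum>y\<in>{0..N+1}. pr j y) = 1"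
proof -
  let ?A = "\<lambda>y. {\<omega> \<in> space M. lab N q (p j \<omega>) = y}"
  have ev: "?A y \<in> events" for y
  proof -
    have "?A y = (\<lambda>\<omega>. lab N q (p j \<omega>)) -` {y} \<inter> space M" by auto
    then show ?thesis using measurable_sets[OF lab_rv[OF j]] by simp
  qed
  have "(\<Sum>y\<in>{0..N+1}. pr j y) = prob (\<Union>y\<in>{0..N+1}. ?A y)"
    unfolding pr_def using ev by (intro finite_measure_finite_Union[symmetric]) (auto simp: disjoint_family_on_def)
  also have "(\<Union>y\<in>{0..N+1}. ?A y) = space M" using lab_range[OF N1 q0 q1] by auto
  finally show ?thesis using prob_space by simp
qed

lemma pr_H0:
  assumes j: "j \<in> {1..N}" and D: "distr M borel (p j) = uniform_measure lborel {0..1}"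
  shows "\<And>y. y \<in> {1..N} \<Longrightarrow> pr j y = q / real N" and "pr j (N+1) = 1 - q"
proof -
  have pb: "pr j y = measure lborel ({0..1} \<inter> bin N q y)" if y: "y \<in> {1..N+1}" for y
  proof -
    have "{\<omega> \<in> space M. lab N q (p j \<omega>) = y} = p j -` bin N q y \<inter> space M"
      using lab_eq[OF N1 q0 q1 y] by auto
    then have "pr j y = measure (distr M borel (p j)) (bin N q y)"
      unfolding pr_def by (simp add: measure_distr[OF p_meas[OF j] bin_borel])
    also have "\<dots> = measure lborel ({0..1} \<inter> bin N q y) / measure lborel {0..1::real}"
      unfolding D by (subst measure_uniform_measure) (auto simp: bin_borel)
    finally show ?thesis by (simp add: measure_def)
  qed
  show "pr j y = q / real N" if y: "y \<in> {1..N}" for y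
  proof -
    have a0: "0 \<le> (real y - 1) * q / real N" using y q0 by auto
    have b1: "real y * q / real N \<le> q"
    proof -
      have "real y * q \<le> real N * q" using y q0 by (intro mult_right_mono) auto
      then show ?thesis using N1 by (simp add: divide_le_eq mult.commute)
    qed
    have "{0..1} \<inter> bin N q y = {(real y - 1) * q / real N ..< real y * q / real N}"
      using y a0 b1 q1 by (auto simp: bin_def)
    moreover have "(real y - 1) * q / real N \<le> real y * q / real N"
      using q0 N1 by (intro divide_right_mono mult_right_mono) auto
    ultimately have "measure lborel ({0..1} \<inter> bin N q y) = real y * q / real N - (real y - 1) * q / real N"
      by (simp add: measure_def)
    also have "\<dots> = q / real N" using N1 by (simp add: field_simps)
    finally show ?thesis using pb y by simp
  qed
  have "{0..1} \<inter> bin N q (N+1) = {q..1}" unfolding bin_def using q0 q1 by auto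
  then show "pr j (N+1) = 1 - q" using pb[of "N+1"] q1 by (simp add: measure_def)
qed

end


lemma KP_RV:
  assumes "N \<ge> 1" "0 < q" "q < 1" "c \<le> cnt H0 v (N+1)"
  shows "ktilde_plus N q H0 c (\<lambda>j. rep N q (v j)) = Max {i\<in>{c..N}. int (cs {1..N} v i) = int i - int c}"
proof -
  have "load N q H0 (\<lambda>j. rep N q (v j)) (N+1) = cnt H0 v (N+1)" using load_RV[OF assms(1-3)] by simp
  moreover have "{i\<in>{c..N}. int (loads N q {1..N} (\<lambda>j. rep N q (v j)) 1 i) = int i - int c}
     = {i\<in>{c..N}. int (cs {1..N} v i) = int i - int c}"
    using loads_RV[OF assms(1-3)] by auto
  ultimately show ?thesis using assms(4) unfolding ktilde_plus_def by simp
qed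

context fw begin

lemma support_A':
  "(\<Sum>v\<in>PP. W v * (if real (cs H0 v N) \<le> real (card H0) - real c then f v else 0))
    = (\<Sum>v\<in>PP. W v * (if Av v then f v else 0))"
proof (rule sum.cong[OF refl])
  fix v assume v: "v \<in> PP"
  show "W v * (if real (cs H0 v N) \<le> real (card H0) - real c then f v else 0) = W v * (if Av v then f v else 0)"
  proof (cases "W v = 0")
    case False
    have "v j \<noteq> 0" if "j \<in> H0" for j
    proof
      assume "v j = 0"
      then have "pr j (v j) = 0" using pr0[OF that] by simp
      moreover have "j \<in> II" using that HU by auto
      ultimately have "W v = 0" unfolding WS_def by (intro prod_zero) auto
      then show False using False by simp
    qed
    moreover have "v j \<le> Suc N" if "j \<in> H0" for j
    proof -
      have "j \<in> II" using that HU by auto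
      then show ?thesis using PiE_mem[OF v] by fastforce
    qed
    ultimately have "cs H0 v N + cnt H0 v (Suc N) = card H0"
      by (intro cs_full[OF fin0]) (auto simp: Suc_le_eq)
    then have "real (cs H0 v N) \<le> real (card H0) - real c \<longleftrightarrow> Av v" unfolding Av_def by auto
    then show ?thesis by simp
  qed simp
qed

end

theorem theorem3:
  fixes M :: "'a measure" and p :: "nat \<Rightarrow> 'a \<Rightarrow> real"
    and N c :: nat and q :: real and H0 :: "nat set"
  defines "H1 \<equiv> {1..N} - H0"
  defines "N0 \<equiv> card H0"
  defines "N1 \<equiv> card H1"
  defines "pv \<equiv> (\<lambda>x i. p i x)"
  defines "A \<equiv> {x \<in> space M. load N q H0 (pv x) (N + 1) \<ge> c}"
  defines "E1 \<equiv> {x \<in> space M. loads N q H1 (pv x) 1 c = N1}"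
  defines "A' \<equiv> {x \<in> space M. real (loads N q H0 (pv x) 1 N) \<le> real N0 - real c}"
  assumes "prob_space M"
    and "N \<ge> 1" and "H0 \<subseteq> {1..N}"
    and "0 < q" and "q < 1"
    and "c \<ge> 1" and "c \<le> N0"
    and "prob_space.indep_vars M (\<lambda>_. borel) p {1..N}"
    and "\<And>i. i \<in> H0 \<Longrightarrow> distr M borel (p i) = uniform_measure lborel {0..1}"
    and "\<And>i. i \<in> H1 \<Longrightarrow> AE x in M. p i x \<in> {0..1}"
  shows "((\<integral>x. real c / real (ktilde_plus N q H0 c (pv x)) * indicator A x \<partial>M)
           \<le> measure M E1 * cond_expect M (\<lambda>x. real c / (real c + real N1 + real (loads N q H0 (pv x) 1 (N1 + c)))) A
             + 1 - measure M E1)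
         \<and> (cond_expect M (\<lambda>x. real (ktilde_plus N q H0 c (pv x))) A
           \<ge> (real N1 + real c) * measure M E1
             / (1 - cond_expect M (\<lambda>x. real (loads N q H0 (pv x) 1 N) / real N) A'))"
proof -
  note PS = assms(8) and N1a = assms(9) and H0I = assms(10) and q0 = assms(11) and q1 = assms(12)
    and c1 = assms(13) and cN0 = assms(14) and indp = assms(15) and unif = assms(16)
  have setI: "setting M p N q"
    unfolding setting_def setting_axioms_def using PS N1a q0 q1 indp by auto
  interpret S: setting M p N q by (rule setI)
  have HU: "H0 \<union> H1 = {1..N}" and HI: "H0 \<inter> H1 = {}" using H0I unfolding H1_def by auto
  have prH0: "\<And>y. y \<in> {1..N} \<Longrightarrow> S.pr j y = q / real N" "S.pr j (N+1) = 1 - q" if "j \<in> H0" for j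
    using S.pr_H0[OF _ unif[OF that]] that H0I by auto
  have fwI: "fw N c H0 H1 S.pr"
  proof (unfold_locales)
    show "1 \<le> N" "H0 \<union> H1 = {1..N}" "H0 \<inter> H1 = {}" "1 \<le> c" "c \<le> card H0"
      using N1a HU HI c1 cN0 unfolding N0_def by auto
    show "\<And>j y. 0 \<le> S.pr j y" unfolding S.pr_def by simp
    show "\<And>j. j \<in> {1..N} \<Longrightarrow> (\<Sum>y\<in>{0..N+1}. S.pr j y) = 1" by (rule S.pr_sum)
    show "\<And>j y. j \<in> H0 \<Longrightarrow> 1 \<le> y \<Longrightarrow> y \<le> N \<Longrightarrow> S.pr j y = S.pr j 1"
      using prH0 N1a by auto
    show "\<And>j. j \<in> H0 \<Longrightarrow> 0 < S.pr j (N + 1)" using prH0 q1 by auto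
    show "S.pr j 0 = 0" if j: "j \<in> H0" for j
    proof -
      have jI: "j \<in> {1..N}" using j H0I by auto
      have "{0..N+1} = insert 0 (insert (N+1) {1..N})" by auto
      then have "(\<Sum>y\<in>{0..N+1}. S.pr j y) = S.pr j 0 + (S.pr j (N+1) + (\<Sum>y\<in>{1..N}. S.pr j y))"
        by simp
      also have "(\<Sum>y\<in>{1..N}. S.pr j y) = (\<Sum>y\<in>{1..N}. q / real N)" using prH0[OF j] by (intro sum.cong) auto
      also have "\<dots> = q" using N1a by simp
      finally show ?thesis using S.pr_sum[OF jI] prH0(2)[OF j] by simp
    qed
  qed
  interpret F: fw N c H0 H1 S.pr by (rule fwI)
  have WW: "S.W = F.W" unfolding S.W_def F.WS_def by (rule ext) simp
  have tr: "(\<integral>x. \<phi> x \<partial>M) = (\<Sum>v\<in>F.PP. F.W v * Fn v)" if "\<And>x. x \<in> space M \<Longrightarrow> \<phi> x = Fn (S.Lam x)" for \<phi> Fn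
  proof -
    have "(\<integral>x. \<phi> x \<partial>M) = (\<integral>x. Fn (S.Lam x) \<partial>M)" using that by (intro Bochner_Integration.integral_cong) auto
    also have "\<dots> = (\<Sum>v\<in>F.PP. Fn v * S.W v)" by (rule S.transfer(2))
    finally show ?thesis by (simp add: WW mult.commute)
  qed
  have meas: "measure M {x\<in>space M. P (S.Lam x)} = (\<Sum>v\<in>F.PP. F.W v * (if P v then 1 else 0))" for P
  proof -
    have "measure M {x\<in>space M. P (S.Lam x)} = (\<integral>x. indicator {x\<in>space M. P (S.Lam x)} x \<partial>M)"
      by (simp add: Int_absorb2)
    also have "\<dots> = (\<Sum>v\<in>F.PP. F.W v * (if P v then 1 else 0))" by (rule tr) (auto simp: indicator_def)
    finally show ?thesis .
  qed
  have bins: "pv x j \<in> bin N q l \<longleftrightarrow> rep N q (S.Lam x j) \<in> bin N q l" if "j \<in> {1..N}" "l \<in> {1..N+1}" for x j l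
    using rep_lab[OF N1a q0 q1 that(2)] that unfolding pv_def S.Lam_def by simp
  have LD: "loads N q S (pv x) 1 b = cs S (S.Lam x) b" if "S \<subseteq> {1..N}" "b \<le> N+1" for x S b
  proof -
    have "loads N q S (pv x) 1 b = loads N q S (\<lambda>j. rep N q (S.Lam x j)) 1 b"
      using that bins by (intro loads_cong) auto
    also have "\<dots> = cs S (S.Lam x) b" by (rule loads_RV[OF N1a q0 q1 that(2)])
    finally show ?thesis .
  qed
  have LT: "load N q H0 (pv x) (N+1) = cnt H0 (S.Lam x) (N+1)" for x
  proof -
    have "load N q H0 (pv x) (N+1) = load N q H0 (\<lambda>j. rep N q (S.Lam x j)) (N+1)"
      using H0I bins by (intro load_cong) auto
    also have "\<dots> = cnt H0 (S.Lam x) (N+1)" by (rule load_RV[OF N1a q0 q1]) auto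
    finally show ?thesis .
  qed
  have KP: "ktilde_plus N q H0 c (pv x) = F.K (S.Lam x)" if "F.Av (S.Lam x)" for x
  proof -
    have "ktilde_plus N q H0 c (pv x) = ktilde_plus N q H0 c (\<lambda>j. rep N q (S.Lam x j))"
      using H0I bins by (intro ktilde_plus_cong) auto
    also have "\<dots> = F.K (S.Lam x)" unfolding F.K_def
      by (rule KP_RV[OF N1a q0 q1]) (use that in \<open>simp add: F.Av_def\<close>)
    finally show ?thesis .
  qed
  have indA: "indicator A x = (if F.Av (S.Lam x) then 1 else (0::real))" if "x \<in> space M" for x
    using that unfolding A_def F.Av_def by (simp add: LT[simplified] indicator_def)
  have mA: "measure M A = F.aa"
  proof -
    have "A = {x\<in>space M. F.Av (S.Lam x)}" unfolding A_def F.Av_def by (simp add: LT[simplified])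
    then show ?thesis unfolding F.aa_def using meas by simp
  qed
  have mE1: "measure M E1 = F.ee"
  proof -
    have cN: "c \<le> N + 1" using cN0 F.card_HU unfolding N0_def by simp
    have "loads N q H1 (pv x) 1 c = cs H1 (S.Lam x) c" for x
      using LD[of H1 c x] HU cN by auto
    then have "E1 = {x\<in>space M. F.E1v (S.Lam x)}" unfolding E1_def F.E1v_def N1_def
      by simp
    then show ?thesis unfolding F.ee_def using meas by simp
  qed
  have I1: "(\<integral>x. real c / real (ktilde_plus N q H0 c (pv x)) * indicator A x \<partial>M)
      = (\<Sum>v\<in>F.PP. F.W v * (if F.Av v then real c / real (F.K v) else 0))"
    by (rule tr) (simp add: indA KP)
  have I2: "(\<integral>x. real c / (real c + real N1 + real (loads N q H0 (pv x) 1 (N1 + c))) * indicator A x \<partial>M) = F.hh"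
    unfolding F.hh_def
  proof (rule tr)
    fix x assume x: "x \<in> space M"
    have "loads N q H0 (pv x) 1 (N1 + c) = cs H0 (S.Lam x) F.nn"
      using LD[of H0 "N1 + c" x] H0I F.nn_le unfolding F.nn_def N1_def by simp
    then show "real c / (real c + real N1 + real (loads N q H0 (pv x) 1 (N1 + c))) * indicator A x =
      (if F.Av (S.Lam x) then real c / (real c + real (card H1) + real (cs H0 (S.Lam x) F.nn)) else 0)"
      using indA[OF x] unfolding N1_def by simp
  qed
  have I3: "(\<integral>x. real (ktilde_plus N q H0 c (pv x)) * indicator A x \<partial>M)
      = (\<Sum>v\<in>F.PP. F.W v * (if F.Av v then real (F.K v) else 0))"
    by (rule tr) (simp add: indA KP)
  have mA': "measure M A' = F.aa"
  proof -
    have "A' = {x\<in>space M. real (cs H0 (S.Lam x) N) \<le> real (card H0) - real c}"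
      unfolding A'_def N0_def using LD[of H0 N] H0I by auto
    then have "measure M A' = (\<Sum>v\<in>F.PP. F.W v * (if real (cs H0 v N) \<le> real (card H0) - real c then 1 else 0))"
      using meas by simp
    also have "\<dots> = F.aa" unfolding F.aa_def by (rule F.support_A')
    finally show ?thesis .
  qed
  have I4: "(\<integral>x. real (loads N q H0 (pv x) 1 N) / real N * indicator A' x \<partial>M) = F.TT"
  proof -
    have "(\<integral>x. real (loads N q H0 (pv x) 1 N) / real N * indicator A' x \<partial>M)
       = (\<Sum>v\<in>F.PP. F.W v * (if real (cs H0 v N) \<le> real (card H0) - real c then real (cs H0 v N) / real N else 0))"
    proof (rule tr)
      fix x assume x: "x \<in> space M"
      have "loads N q H0 (pv x) 1 N = cs H0 (S.Lam x) N" using LD[of H0 N x] H0I by simp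
      then show "real (loads N q H0 (pv x) 1 N) / real N * indicator A' x =
        (if real (cs H0 (S.Lam x) N) \<le> real (card H0) - real c then real (cs H0 (S.Lam x) N) / real N else 0)"
        using x unfolding A'_def N0_def by (simp add: indicator_def)
    qed
    also have "\<dots> = F.TT" unfolding F.TT_def by (rule F.support_A')
    finally show ?thesis .
  qed
  have nnN: "real N1 + real c = real F.nn" unfolding F.nn_def N1_def by simp
  show ?thesis
  proof
    show "(\<integral>x. real c / real (ktilde_plus N q H0 c (pv x)) * indicator A x \<partial>M)
           \<le> measure M E1 * cond_expect M (\<lambda>x. real c / (real c + real N1 + real (loads N q H0 (pv x) 1 (N1 + c)))) A
             + 1 - measure M E1"
      unfolding cond_expect_def I1 I2 mA mE1 by (rule F.fin_claim1)
    show "cond_expect M (\<lambda>x. real (ktilde_plus N q H0 c (pv x))) A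
           \<ge> (real N1 + real c) * measure M E1
             / (1 - cond_expect M (\<lambda>x. real (loads N q H0 (pv x) 1 N) / real N) A')"
      unfolding cond_expect_def I3 I4 mA mA' mE1 nnN by (rule F.fin_claim2)
  qed
qed


end
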